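(* Let $\mathcal{F}=\{\sum_{i=1}^m a_i\,\mathrm{ReLU}(w_i^\top x+b_i): m\in\mathbb{N},\ w_i\in\mathbb{R}^d,\ a_i,b_i\in\mathbb{R}\}$ be the class of two-layer ReLU networks on $\mathbb{R}^d$, and let $P,Q$ be distributions supported on the unit sphere $S^{d-1}=\{x:\|x\|_2=1\}$. Suppose there exists $\epsilon>0$ with $$Q\big(\{x\in S^{d-1}:\mathrm{dist}(x,\mathrm{supp}(P))\ge\epsilon\}\big)>0.$$ Then for every $M>0$ there exists $f\in\mathcal{F}$ with $\mathbb{E}_P[f(x)^2]=0$ and $\mathbb{E}_Q[f(x)^2]\ge M$.
   Context: $\mathrm{ReLU}(z)=\max(z,0)$; $\mathrm{supp}(P)$ is the support of $P$ and $\mathrm{dist}(x,S)=\inf_{s\in S}\|x-s\|_2$. *)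

theory Defs
  imports "HOL-Probability.Probability"
begin

definition relu :: "real \<Rightarrow> real" where
  "relu z = max z 0"

definition relu_net :: "(real \<times> 'a::euclidean_space \<times> real) list \<Rightarrow> 'a \<Rightarrow> real" where
  "relu_net ps x = (\<Sum>(a, w, b) \<leftarrow> ps. a * relu (w \<bullet> x + b))"

definition two_layer_relu_class :: "('a::euclidean_space \<Rightarrow> real) set" where
  "two_layer_relu_class = {f. \<exists>ps. f = relu_net ps}"

definition msupp :: "'a::metric_space measure \<Rightarrow> 'a set" where
  "msupp P = {x. \<forall>e>0. emeasure P (ball x e) > 0}"

end

theory Submission
  imports Defs
begin

lemma sphere_dist_sq:
  fixes c x :: "'a::euclidean_space"
  assumes "norm c = 1" "norm x = 1"
  shows "(dist c x)\<^sup>2 = 2 - 2 * (c \<bullet> x)"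
proof -
  have "(dist c x)\<^sup>2 = (c - x) \<bullet> (c - x)" by (simp add: dist_norm power2_norm_eq_inner)
  also have "\<dots> = c \<bullet> c + x \<bullet> x - 2 * (c \<bullet> x)"
    by (simp add: inner_diff_left inner_diff_right inner_commute)
  also have "c \<bullet> c = 1" using assms by (metis norm_eq_sqrt_inner real_sqrt_eq_1_iff)
  also have "x \<bullet> x = 1" using assms by (metis norm_eq_sqrt_inner real_sqrt_eq_1_iff)
  finally show ?thesis by simp
qed

lemma relu_net_single: "relu_net [(a, w, b)] x = a * relu (w \<bullet> x + b)"
  by (simp add: relu_net_def)

theorem mainTheorem7:
  fixes P Q :: "'a::euclidean_space measure"
  assumes "prob_space P" and "prob_space Q"
    and "sets P = sets borel" and "sets Q = sets borel"
    and "AE x in P. norm x = 1" and "AE x in Q. norm x = 1"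
    and "\<epsilon> > 0"
    and "measure Q {x. norm x = 1 \<and> infdist x (msupp P) \<ge> \<epsilon>} > 0"
  shows "\<forall>M>0. \<exists>f \<in> two_layer_relu_class.
           (\<integral>x. (f x)\<^sup>2 \<partial>P) = 0 \<and> (\<integral>x. (f x)\<^sup>2 \<partial>Q) \<ge> M"
proof (intro allI impI)
  fix M :: real assume "M > 0"
  interpret P: prob_space P by fact
  interpret Q: prob_space Q by fact
  define S where "S = msupp P"
  define T where "T = {x::'a. norm x = 1 \<and> infdist x S \<ge> \<epsilon>}"
  have T_eq: "T = sphere 0 1 \<inter> {x. infdist x S \<ge> \<epsilon>}" unfolding T_def by auto
  have "closed {x. infdist x S \<ge> \<epsilon>}"
    by (intro closed_Collect_le continuous_intros) 
  hence "compact T" unfolding T_eq by (intro compact_Int_closed) auto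
  moreover have "T \<subseteq> (\<Union>c\<in>T. ball c (\<epsilon>/4))" using \<open>\<epsilon> > 0\<close> by auto
  ultimately obtain C where C: "C \<subseteq> T" "finite C" "T \<subseteq> (\<Union>c\<in>C. ball c (\<epsilon>/4))"
    using compactE_image[of T T "\<lambda>c. ball c (\<epsilon>/4)"] by auto
  define A where "A c = ball c (\<epsilon>/4) \<inter> sphere 0 1" for c :: 'a
  have Asets: "A c \<in> sets Q" for c unfolding A_def using assms(4) by auto
  have "T \<subseteq> (\<Union>c\<in>C. A c)" using C(3) unfolding A_def T_def by auto
  hence "measure Q T \<le> measure Q (\<Union>c\<in>C. A c)"
    using Asets C(2) by (intro Q.finite_measure_mono) auto
  also have "\<dots> \<le> (\<Sum>c\<in>C. measure Q (A c))"
    using Asets C(2) by (intro measure_UNION_le) auto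
  finally have "0 < (\<Sum>c\<in>C. measure Q (A c))" using assms(8) unfolding T_def S_def by linarith
  have "\<exists>c. c \<in> C \<and> measure Q (A c) > 0"
  proof (rule ccontr)
    assume "\<not> (\<exists>c. c \<in> C \<and> measure Q (A c) > 0)"
    hence "\<And>c. c \<in> C \<Longrightarrow> measure Q (A c) = 0" using measure_nonneg[of Q] by (metis order_less_le)
    hence "(\<Sum>c\<in>C. measure Q (A c)) = 0" by simp
    thus False using \<open>0 < (\<Sum>c\<in>C. measure Q (A c))\<close> by simp
  qed
  then obtain c where c: "c \<in> C" "measure Q (A c) > 0" by blast
  hence cT: "c \<in> T" using C(1) by auto
  hence nc: "norm c = 1" and dc: "infdist c S \<ge> \<epsilon>" unfolding T_def by auto
  define q where "q = measure Q (A c)"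
  define \<eta> where "\<eta> = 3 * \<epsilon>\<^sup>2 / 32"
  have \<eta>pos: "\<eta> > 0" unfolding \<eta>_def using \<open>\<epsilon> > 0\<close> by simp
  define K where "K = 1 + M / (\<eta>\<^sup>2 * q)"
  define b where "b = - (1 - \<epsilon>\<^sup>2 / 8)"
  define f where "f = relu_net [(K, c, b)]"
  have f_eq: "f x = K * relu (c \<bullet> x + b)" for x unfolding f_def by (simp add: relu_net_single)
  have fcl: "f \<in> two_layer_relu_class" unfolding two_layer_relu_class_def f_def by auto
  have fmeas: "(\<lambda>x. (f x)\<^sup>2) \<in> borel_measurable borel"
    unfolding f_eq relu_def by measurable
  have cb_null: "cball c (\<epsilon>/2) \<in> null_sets P"
  proof -
    have "\<forall>y\<in>cball c (\<epsilon>/2). \<exists>e>0. emeasure P (ball y e) = 0"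
    proof
      fix y assume y: "y \<in> cball c (\<epsilon>/2)"
      have "y \<notin> S"
      proof
        assume "y \<in> S"
        hence "infdist c S \<le> dist c y" by (rule infdist_le)
        thus False using y dc \<open>\<epsilon> > 0\<close> by auto
      qed
      thus "\<exists>e>0. emeasure P (ball y e) = 0" unfolding S_def msupp_def by (auto simp: not_less)
    qed
    then obtain e where e: "\<And>y. y \<in> cball c (\<epsilon>/2) \<Longrightarrow> e y > 0 \<and> emeasure P (ball y (e y)) = 0"
      by metis
    have "cball c (\<epsilon>/2) \<subseteq> (\<Union>y\<in>cball c (\<epsilon>/2). ball y (e y))" using e by force
    then obtain Y where Y: "Y \<subseteq> cball c (\<epsilon>/2)" "finite Y" "cball c (\<epsilon>/2) \<subseteq> (\<Union>y\<in>Y. ball y (e y))"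
      using compactE_image[OF compact_cball[of c "\<epsilon>/2"], where C="cball c (\<epsilon>/2)" and f="\<lambda>y. ball y (e y)"] by auto
    have "emeasure P (cball c (\<epsilon>/2)) \<le> emeasure P (\<Union>y\<in>Y. ball y (e y))"
      using Y assms(3) by (intro emeasure_mono) auto
    also have "\<dots> \<le> (\<Sum>y\<in>Y. emeasure P (ball y (e y)))"
      using Y assms(3) by (intro emeasure_subadditive_finite) auto
    also have "\<dots> = 0" using Y e by (intro sum.neutral) auto
    finally show ?thesis using assms(3) by (auto intro: null_setsI)
  qed
  have "AE x in P. (f x)\<^sup>2 = 0"
    using AE_not_in[OF cb_null] assms(5)
  proof eventually_elim
    case (elim x)
    hence "dist c x > \<epsilon>/2" by auto
    hence "(dist c x)\<^sup>2 > (\<epsilon>/2)\<^sup>2" using \<open>\<epsilon> > 0\<close>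
      by (intro power_strict_mono) auto
    hence "2 - 2 * (c \<bullet> x) > \<epsilon>\<^sup>2/4" using sphere_dist_sq[OF nc elim(2)]
      by (simp add: power_divide)
    hence "c \<bullet> x + b < 0" unfolding b_def by simp
    thus ?case unfolding f_eq relu_def by simp
  qed
  hence P0: "(\<integral>x. (f x)\<^sup>2 \<partial>P) = 0" by (rule integral_eq_zero_AE)
  have qpos: "q > 0" using c unfolding q_def by simp
  have Kge: "K \<ge> 1" unfolding K_def using qpos \<eta>pos \<open>M>0\<close> by simp
  have lower: "(\<eta>\<^sup>2 * K\<^sup>2) * indicator (A c) x \<le> (f x)\<^sup>2" for x
  proof (cases "x \<in> A c")
    case True
    hence nx: "norm x = 1" and dx: "dist c x < \<epsilon>/4" unfolding A_def by auto
    have "(dist c x)\<^sup>2 < (\<epsilon>/4)\<^sup>2" using dx by (intro power_strict_mono) auto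
    hence "2 - 2 * (c \<bullet> x) < \<epsilon>\<^sup>2/16" using sphere_dist_sq[OF nc nx]
      by (simp add: power_divide)
    hence h: "c \<bullet> x + b \<ge> \<eta>" unfolding b_def \<eta>_def by simp
    hence "relu (c \<bullet> x + b) \<ge> \<eta>" unfolding relu_def by simp
    hence "K * \<eta> \<le> f x" unfolding f_eq using Kge by (intro mult_left_mono) auto
    hence "(K * \<eta>)\<^sup>2 \<le> (f x)\<^sup>2" using Kge \<eta>pos by (intro power_mono) auto
    thus ?thesis using True by (simp add: power_mult_distrib mult.commute)
  next
    case False thus ?thesis by simp
  qed
  have bound: "AE x in Q. norm ((f x)\<^sup>2) \<le> (K * (2 + \<bar>b\<bar>))\<^sup>2"
    using assms(6)
  proof eventually_elim
    case (elim x)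
    have "\<bar>c \<bullet> x\<bar> \<le> 1" using Cauchy_Schwarz_ineq2[of c x] nc elim by simp
    hence "\<bar>relu (c \<bullet> x + b)\<bar> \<le> 2 + \<bar>b\<bar>" unfolding relu_def by auto
    hence "\<bar>f x\<bar> \<le> K * (2 + \<bar>b\<bar>)" unfolding f_eq using Kge by (simp add: abs_mult)
    hence "\<bar>f x\<bar>\<^sup>2 \<le> (K * (2 + \<bar>b\<bar>))\<^sup>2" by (intro power_mono) auto
    thus ?case by simp
  qed
  have intQ: "integrable Q (\<lambda>x. (f x)\<^sup>2)"
    by (rule Q.integrable_const_bound[OF bound]) (use fmeas assms(4) in simp)
  have "(\<integral>x. (\<eta>\<^sup>2 * K\<^sup>2) * indicator (A c) x \<partial>Q) \<le> (\<integral>x. (f x)\<^sup>2 \<partial>Q)"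
    using lower intQ Asets by (intro integral_mono integrable_mult_right integrable_real_indicator) (auto simp: Q.emeasure_finite less_top[symmetric])
  moreover have "(\<integral>x. (\<eta>\<^sup>2 * K\<^sup>2) * indicator (A c) x \<partial>Q) = \<eta>\<^sup>2 * K\<^sup>2 * q"
    unfolding q_def using Asets by simp
  moreover have "\<eta>\<^sup>2 * K\<^sup>2 * q \<ge> M"
  proof -
    have "\<eta>\<^sup>2 * K\<^sup>2 * q \<ge> \<eta>\<^sup>2 * K * q"
      using Kge qpos \<eta>pos by (intro mult_right_mono mult_left_mono) (auto simp: power2_eq_square)
    moreover have "\<eta>\<^sup>2 * K * q = \<eta>\<^sup>2 * q + M" unfolding K_def using qpos \<eta>pos
      by (simp add: field_simps)
    ultimately show ?thesis using qpos \<eta>pos by (smt (verit) mult_pos_pos zero_less_power)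
  qed
  ultimately have "(\<integral>x. (f x)\<^sup>2 \<partial>Q) \<ge> M" by linarith
  thus "\<exists>f \<in> two_layer_relu_class.
           (\<integral>x. (f x)\<^sup>2 \<partial>P) = 0 \<and> (\<integral>x. (f x)\<^sup>2 \<partial>Q) \<ge> M"
    using fcl P0 by blast
qed

end
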